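(* Let $p$ be a prime, $q=p^m$, $1\le r<p$, and enumerate $\mathbb{F}_q^*=\{\alpha_1,\dots,\alpha_{q-1}\}$. Let $\mathcal{G}=(\mathbb{F}_q[T]/(T^{r+1}))^*/\mathbb{F}_q^*$; every non-identity element has order $p$, so $\mathcal{G}$ is an $\mathbb{F}_p$-vector space of dimension $rm$. For $I=\{i_1,\dots,i_t\}\subseteq\{1,\dots,q-1\}$, the subgroup ($\mathbb{F}_p$-subspace) of $\mathcal{G}$ generated by the classes of $1+\alpha_iT$, $i\in I$, has $\mathbb{F}_p$-dimension $rm$ if and only if the matrix $$G_I=\begin{pmatrix}\alpha_{i_1}&\cdots&\alpha_{i_t}\\ \alpha_{i_1}^2&\cdots&\alpha_{i_t}^2\\ \vdots&&\vdots\\ \alpha_{i_1}^r&\cdots&\alpha_{i_t}^r\end{pmatrix}\in\mathbb{F}_p^{rm\times t}$$ has rank $rm$ over $\mathbb{F}_p$, where each entry $\alpha_i^k$ is replaced by its coordinate column vector in $\mathbb{F}_p^m$ with respect to a fixed $\mathbb{F}_p$-basis of $\mathbb{F}_q$.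
   Context: $T$ is an indeterminate over $\mathbb{F}_q$; $\mathbb{F}_q^*$ denotes the image of the nonzero constants in $(\mathbb{F}_q[T]/(T^{r+1}))^*$. *)

theory Defs
  imports "HOL-Computational_Algebra.Polynomial" "HOL-Algebra.Coset" "HOL-Algebra.Generated_Groups"
begin

text \<open>Multiplication in the ring F_q[T]/(T^(r+1)), elements represented by
  polynomials of degree at most r (remainders modulo T^(r+1)).\<close>
definition trunc_mult :: "nat \<Rightarrow> 'a::field poly \<Rightarrow> 'a poly \<Rightarrow> 'a poly" where
  "trunc_mult r f g = (f * g) mod (monom 1 (r + 1))"

definition trunc_units :: "nat \<Rightarrow> ('a::field) poly monoid" where
  "trunc_units r = \<lparr> carrier = {f. degree f \<le> r \<and>
        (\<exists>g. degree g \<le> r \<and> trunc_mult r f g = 1)},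
     mult = trunc_mult r, one = 1 \<rparr>"

definition const_units :: "('a::field) poly set" where
  "const_units = {[:c:] | c. c \<noteq> 0}"

definition calG :: "nat \<Rightarrow> ('a::field) poly set monoid" where
  "calG r = trunc_units r Mod const_units"

definition calG_class :: "nat \<Rightarrow> 'a::field \<Rightarrow> 'a poly set" where
  "calG_class r a = const_units #>\<^bsub>trunc_units r\<^esub> [:1, a:]"

definition prime_subfield :: "'a::field set" where
  "prime_subfield = range of_nat"

definition is_Fp_basis :: "nat \<Rightarrow> (nat \<Rightarrow> 'a::field) \<Rightarrow> bool" where
  "is_Fp_basis m b \<longleftrightarrow> (\<forall>x. \<exists>!c. (\<forall>j<m. c j \<in> prime_subfield) \<and> (\<forall>j\<ge>m. c j = 0)
       \<and> x = (\<Sum>j<m. c j * b j))"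

definition Fp_coord :: "nat \<Rightarrow> (nat \<Rightarrow> 'a::field) \<Rightarrow> 'a \<Rightarrow> nat \<Rightarrow> 'a" where
  "Fp_coord m b x = (THE c. (\<forall>j<m. c j \<in> prime_subfield) \<and> (\<forall>j\<ge>m. c j = 0)
       \<and> x = (\<Sum>j<m. c j * b j))"

definition Fp_indep_cols :: "'r set \<Rightarrow> 'c set \<Rightarrow> ('r \<Rightarrow> 'c \<Rightarrow> 'a::field) \<Rightarrow> bool" where
  "Fp_indep_cols R J M \<longleftrightarrow> (\<forall>c. (\<forall>i\<in>J. c i \<in> prime_subfield) \<and>
       (\<forall>x\<in>R. (\<Sum>i\<in>J. c i * M x i) = 0) \<longrightarrow> (\<forall>i\<in>J. c i = 0))"

definition Fp_rank :: "'r set \<Rightarrow> 'c set \<Rightarrow> ('r \<Rightarrow> 'c \<Rightarrow> 'a::field) \<Rightarrow> nat" where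
  "Fp_rank R C M = Max {card J | J. J \<subseteq> C \<and> Fp_indep_cols R J M}"

text \<open>The matrix G_I: rows indexed by pairs (k, j), 1 \<le> k \<le> r, j < m (the j-th
  coordinate of alpha_i^k), columns indexed by i in I.\<close>
definition G_mat :: "nat \<Rightarrow> nat \<Rightarrow> (nat \<Rightarrow> 'a::field) \<Rightarrow> (nat \<Rightarrow> 'a) \<Rightarrow> nat \<times> nat \<Rightarrow> nat \<Rightarrow> 'a" where
  "G_mat m r b \<alpha> = (\<lambda>(k, j) i. Fp_coord m b (\<alpha> i ^ k) j)"

end

theory Submission
  imports Defs "HOL-Library.Function_Algebras" "HOL-Computational_Algebra.Euclidean_Algorithm"
begin


lemma degree_monom1 [simp]: "degree (monom (1::'a::field) n) = n"
  by (simp add: degree_monom_eq)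

lemma monom1_nz [simp]: "monom (1::'a::field) n \<noteq> 0"
  by simp

lemma coeff_mod_monom:
  fixes x :: "'a::field poly"
  shows "coeff (x mod monom 1 n) j = (if j < n then coeff x j else 0)"
proof -
  let ?M = "monom (1::'a) n"
  have e: "x = ?M * (x div ?M) + x mod ?M" by (simp add: mult.commute)
  show ?thesis
  proof (cases "j < n")
    case True
    have "coeff x j = coeff (?M * (x div ?M)) j + coeff (x mod ?M) j"
      by (subst e) (simp only: coeff_add)
    then show ?thesis using True by (simp add: coeff_monom_mult)
  next
    case False
    show ?thesis
    proof (cases "x mod ?M = 0")
      case False
      then have "degree (x mod ?M) < n" using degree_mod_less'[of ?M x] by simp
      then show ?thesis using \<open>\<not> j < n\<close> by (simp add: coeff_eq_0)
    qed (use False in simp)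
  qed
qed

lemma monom_dvd_iff:
  fixes x :: "'a::field poly"
  shows "monom 1 n dvd x \<longleftrightarrow> (\<forall>j<n. coeff x j = 0)"
proof
  assume "monom 1 n dvd x"
  then obtain y where "x = monom 1 n * y" by (auto elim: dvdE)
  then show "\<forall>j<n. coeff x j = 0" by (simp add: coeff_monom_mult)
next
  assume a: "\<forall>j<n. coeff x j = 0"
  have "x mod monom 1 n = 0"
    by (rule poly_eqI) (simp add: coeff_mod_monom a)
  then show "monom 1 n dvd x" by (simp add: dvd_eq_mod_eq_0)
qed

definition eqm :: "nat \<Rightarrow> 'a::field poly \<Rightarrow> 'a poly \<Rightarrow> bool" where
  "eqm n a b \<longleftrightarrow> monom 1 n dvd (a - b)"

lemma eqm_coeff: "eqm n a b \<Longrightarrow> j < n \<Longrightarrow> coeff a j = coeff b j"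
  unfolding eqm_def monom_dvd_iff by auto

lemma eqm_iff: "eqm n a b \<longleftrightarrow> (\<forall>j<n. coeff a j = coeff b j)"
  unfolding eqm_def monom_dvd_iff by auto

lemma eqm_refl [simp]: "eqm n a a"
  by (simp add: eqm_def)

lemma eqm_sym: "eqm n a b \<Longrightarrow> eqm n b a"
  by (simp add: eqm_iff)

lemma eqm_trans: "eqm n a b \<Longrightarrow> eqm n b c \<Longrightarrow> eqm n a c"
  by (simp add: eqm_iff)

lemma eqm_add: "eqm n a b \<Longrightarrow> eqm n c d \<Longrightarrow> eqm n (a + c) (b + d)"
  by (simp add: eqm_iff)

lemma eqm_mult: "eqm n a b \<Longrightarrow> eqm n c d \<Longrightarrow> eqm n (a * c) (b * d)"
proof -
  assume "eqm n a b" "eqm n c d"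
  then have "monom 1 n dvd (a - b) * c + b * (c - d)" unfolding eqm_def by auto
  moreover have "(a - b) * c + b * (c - d) = a * c - b * d" by (simp add: algebra_simps)
  ultimately show ?thesis unfolding eqm_def by simp
qed

lemma eqm_mono: "m \<le> n \<Longrightarrow> eqm n a b \<Longrightarrow> eqm m a b"
  by (simp add: eqm_iff)

lemma eqm_mod: "eqm n (x mod monom 1 n) x"
  by (simp add: eqm_iff coeff_mod_monom)

lemma eqm_pderiv: "eqm (Suc n) a b \<Longrightarrow> eqm n (pderiv a) (pderiv b)"
  by (simp add: eqm_iff coeff_pderiv)


lemma tm_eqm: "eqm (Suc r) (trunc_mult r f g) (f * g)"
  unfolding trunc_mult_def using eqm_mod[of "Suc r"] by simp

lemma mod_monom_deg: "degree ((x::'a::field poly) mod monom 1 (Suc r)) \<le> r"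
proof (cases "x mod monom 1 (Suc r) = 0")
  case False
  then show ?thesis using degree_mod_less'[of "monom 1 (Suc r)" x] by simp
qed simp

lemma tm_deg: "degree (trunc_mult r f g) \<le> r"
  unfolding trunc_mult_def using mod_monom_deg by simp

lemma tm_small: "degree (f::'a::field poly) \<le> r \<Longrightarrow> f mod monom 1 (Suc r) = f"
  by (rule mod_poly_less) simp

lemma tm_assoc: "trunc_mult r (trunc_mult r f g) h = trunc_mult r f (trunc_mult r g h)"
  unfolding trunc_mult_def by (simp add: mod_mult_left_eq mod_mult_right_eq mult.assoc)

lemma tm_comm: "trunc_mult r f g = trunc_mult r g f"
  unfolding trunc_mult_def by (simp add: mult.commute)

lemma tm_one: "degree f \<le> r \<Longrightarrow> trunc_mult r 1 f = f"
  unfolding trunc_mult_def by (simp add: tm_small)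

lemma tu_carrier: "carrier (trunc_units r) = {f. degree f \<le> r \<and>
        (\<exists>g. degree g \<le> r \<and> trunc_mult r f g = 1)}"
  by (simp add: trunc_units_def)

lemma tu_mult [simp]: "mult (trunc_units r) = trunc_mult r"
  by (simp add: trunc_units_def)

lemma tu_one [simp]: "one (trunc_units r) = 1"
  by (simp add: trunc_units_def)

lemma tu_comm_group: "comm_group (trunc_units (r::nat) :: 'a::field poly monoid)"
proof (rule comm_groupI, goal_cases)
  case (1 x y)
  then obtain x' y' where x': "degree x' \<le> r" "trunc_mult r x x' = 1"
    and y': "degree y' \<le> r" "trunc_mult r y y' = 1" by (auto simp: tu_carrier)
  have "trunc_mult r (trunc_mult r x y) (trunc_mult r x' y') = 
        trunc_mult r (trunc_mult r x x') (trunc_mult r y y')"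
    by (metis tm_assoc tm_comm)
  also have "\<dots> = 1" using x' y' by (simp add: tm_one)
  finally show ?case using tm_deg[of r] by (auto simp: tu_carrier intro!: exI[of _ "trunc_mult r x' y'"])
next
  case 2
  then show ?case by (auto simp: tu_carrier tm_one intro!: exI[of _ 1])
next
  case (3 x y z)
  then show ?case by (simp add: tm_assoc)
next
  case (4 x y)
  then show ?case by (simp add: tm_comm)
next
  case (5 x)
  then show ?case by (simp add: tu_carrier tm_one)
next
  case (6 x)
  then obtain x' where x': "degree x' \<le> r" "trunc_mult r x x' = 1" and "degree x \<le> r"
    by (auto simp: tu_carrier)
  then show ?case by (auto simp: tu_carrier tm_comm intro!: bexI[of _ x'])
qed


definition Vg :: "(nat \<Rightarrow> 'a::field) monoid" where
  "Vg = \<lparr>carrier = UNIV, mult = (+), one = 0\<rparr>"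

lemma Vg_group: "comm_group (Vg :: (nat \<Rightarrow> 'a::field) monoid)"
  by (rule comm_groupI) (auto simp: Vg_def add_ac intro: exI[of _ "- x" for x])

lemma Vg_simps [simp]: "carrier Vg = UNIV" "mult Vg = (+)" "one Vg = 0"
  by (auto simp: Vg_def)

definition dl :: "nat \<Rightarrow> 'a::field poly \<Rightarrow> nat \<Rightarrow> 'a" where
  "dl r f = (\<lambda>k. if k \<in> {1..r} then (-1)^(k-1) * coeff (pderiv f * inv\<^bsub>trunc_units r\<^esub> f) (k-1) else 0)"

lemma tu_inv_eqm:
  assumes "f \<in> carrier (trunc_units r)"
  shows "eqm (Suc r) (f * inv\<^bsub>trunc_units r\<^esub> f) 1"
proof -
  interpret comm_group "trunc_units r" by (rule tu_comm_group)
  have "trunc_mult r f (inv\<^bsub>trunc_units r\<^esub> f) = 1" using r_inv[OF assms] by simp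
  then show ?thesis using tm_eqm[of r f "inv\<^bsub>trunc_units r\<^esub> f"] by (metis eqm_sym)
qed

lemma dl_hom: "dl r \<in> hom (trunc_units r) (Vg :: (nat \<Rightarrow> 'a::field) monoid)"
proof (rule homI)
  interpret U: comm_group "trunc_units r :: 'a poly monoid" by (rule tu_comm_group)
  fix f g :: "'a poly"
  assume f: "f \<in> carrier (trunc_units r)" and g: "g \<in> carrier (trunc_units r)"
  define a where "a = inv\<^bsub>trunc_units r\<^esub> f"
  define b where "b = inv\<^bsub>trunc_units r\<^esub> g"
  have inv: "inv\<^bsub>trunc_units r\<^esub> (trunc_mult r f g) = trunc_mult r a b"
    using U.inv_mult[OF f g] by (simp add: a_def b_def)
  have fa: "eqm r (f * a) 1" using tu_inv_eqm[OF f] eqm_mono[of r "Suc r"] by (simp add: a_def)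
  have gb: "eqm r (g * b) 1" using tu_inv_eqm[OF g] eqm_mono[of r "Suc r"] by (simp add: b_def)
  have e1: "eqm r (pderiv (trunc_mult r f g)) (pderiv (f * g))"
    by (rule eqm_pderiv) (rule tm_eqm)
  have e2: "eqm r (trunc_mult r a b) (a * b)"
    using tm_eqm[of r a b] eqm_mono[of r "Suc r"] by auto
  have e3: "pderiv (f * g) * (a * b) = pderiv f * a * (g * b) + pderiv g * b * (f * a)"
    by (simp add: pderiv_mult algebra_simps)
  have e4: "eqm r (pderiv f * a * (g * b) + pderiv g * b * (f * a)) (pderiv f * a * 1 + pderiv g * b * 1)"
    by (intro eqm_add eqm_mult eqm_refl fa gb)
  have main: "eqm r (pderiv (trunc_mult r f g) * trunc_mult r a b) (pderiv f * a + pderiv g * b)"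
    using eqm_trans[OF eqm_mult[OF e1 e2] e4[folded e3]] by simp
  show "dl r (f \<otimes>\<^bsub>trunc_units r\<^esub> g) = dl r f \<otimes>\<^bsub>Vg\<^esub> dl r g"
  proof (rule ext)
    fix k
    show "dl r (f \<otimes>\<^bsub>trunc_units r\<^esub> g) k = (dl r f \<otimes>\<^bsub>Vg\<^esub> dl r g) k"
    proof (cases "k \<in> {1..r}")
      case True
      then have "k - 1 < r" by auto
      from eqm_coeff[OF main this] show ?thesis using True
        by (simp add: dl_def inv a_def[symmetric] b_def[symmetric] algebra_simps)
    next
      case False
      then have "dl r h k = 0" for h :: "'a poly" unfolding dl_def by auto
      then show ?thesis by simp
    qed
  qed
qed (simp add: Vg_def)


lemma const_in_tu:
  assumes "(c::'a::field) \<noteq> 0"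
  shows "[:c:] \<in> carrier (trunc_units r)"
proof -
  have "trunc_mult r [:c:] [:inverse c:] = 1"
    using assms by (simp add: trunc_mult_def tm_small one_pCons[symmetric] del: one_pCons)
  then show ?thesis by (auto simp: tu_carrier intro!: exI[of _ "[:inverse c:]"])
qed

lemma dl_kernel:
  assumes char: "\<And>n. 0 < n \<Longrightarrow> n \<le> r \<Longrightarrow> of_nat n \<noteq> (0::'a::field)"
  shows "kernel (trunc_units r) Vg (dl r) = (const_units :: 'a poly set)"
proof
  show "const_units \<subseteq> kernel (trunc_units r) Vg (dl r)"
    by (auto simp: const_units_def kernel_def const_in_tu dl_def)
next
  show "kernel (trunc_units r) Vg (dl r) \<subseteq> (const_units :: 'a poly set)"
  proof
    fix f :: "'a poly"
    assume "f \<in> kernel (trunc_units r) Vg (dl r)"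
    then have f: "f \<in> carrier (trunc_units r)" and d0: "dl r f = 0"
      by (auto simp: kernel_def)
    define a where "a = inv\<^bsub>trunc_units r\<^esub> f"
    have "coeff (pderiv f * a) j = 0" if "j < r" for j
    proof -
      have "dl r f (Suc j) = 0" using d0 by simp
      then show ?thesis using that by (simp add: dl_def a_def)
    qed
    then have e1: "eqm r (pderiv f * a) 0" by (simp add: eqm_iff)
    have e2: "eqm r (f * a) 1" using tu_inv_eqm[OF f] eqm_mono[of r "Suc r"] by (simp add: a_def)
    have "eqm r (pderiv f * a * f) (0 * f)" by (rule eqm_mult[OF e1 eqm_refl])
    moreover have "eqm r (pderiv f * (f * a)) (pderiv f * 1)" by (rule eqm_mult[OF eqm_refl e2])
    ultimately have "eqm r (pderiv f) 0"
      by (metis (no_types, lifting) eqm_sym eqm_trans mult.commute mult.left_commute mult_1_right mult_zero_left)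
    then have cz: "coeff f (Suc j) = 0" if "j < r" for j
    proof -
      have "coeff (pderiv f) j = coeff 0 j" using eqm_coeff[OF \<open>eqm r (pderiv f) 0\<close> that] .
      then have "of_nat (Suc j) * coeff f (Suc j) = 0" by (simp add: coeff_pderiv)
      then show ?thesis using char[of "Suc j"] that by simp
    qed
    have degf: "degree f \<le> r" using f by (simp add: tu_carrier)
    have fc: "f = [:coeff f 0:]"
    proof (rule poly_eqI)
      fix n show "coeff f n = coeff [:coeff f 0:] n"
      proof (cases n)
        case (Suc j)
        then show ?thesis using cz[of j] degf coeff_eq_0[of f n] by (cases "j < r") auto
      qed simp
    qed
    moreover have "f \<noteq> 0"
    proof
      assume f0: "f = 0"
      from f obtain g where "trunc_mult r f g = 1" by (auto simp: tu_carrier)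
      moreover have "trunc_mult r 0 g = 0" by (simp add: trunc_mult_def)
      ultimately show False using f0 by simp
    qed
    ultimately have "coeff f 0 \<noteq> 0" by (metis pCons_0_0)
    then show "f \<in> const_units" unfolding const_units_def using fc by blast
  qed
qed


lemma pCons0_power: "[:0, c:] ^ n = monom (c ^ n) n"
proof -
  have "[:0, c:] = monom c 1" by (simp add: monom_Suc monom_0)
  then show ?thesis by (simp add: monom_power)
qed

definition ginv :: "nat \<Rightarrow> 'a::field \<Rightarrow> 'a poly" where
  "ginv r a = (\<Sum>i\<le>r. monom ((-a)^i) i)"

lemma ginv_deg: "degree (ginv r a) \<le> r"
  unfolding ginv_def by (rule degree_sum_le) (auto intro: order.trans[OF degree_monom_le])

lemma ginv_coeff: "j \<le> r \<Longrightarrow> coeff (ginv r a) j = (-a)^j"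
  unfolding ginv_def by (simp add: coeff_sum coeff_monom)

lemma ginv_mult: "trunc_mult r (ginv r a) [:1, a:] = 1"
proof -
  have "ginv r a = (\<Sum>i\<le>r. [:0, -a:] ^ i)" unfolding ginv_def by (simp add: pCons0_power)
  moreover have "1 - [:0, -a:] = [:1, a:]"
    by (rule poly_eqI) (auto simp: coeff_pCons split: nat.split)
  ultimately have "ginv r a * [:1, a:] = (1 - [:0, -a:]) * (\<Sum>i\<le>r. [:0, -a:] ^ i)"
    by (simp only: mult.commute)
  also have "\<dots> = 1 - monom ((-a) ^ Suc r) (Suc r)" by (subst sum_gp_basic) (simp only: pCons0_power)
  finally have e: "ginv r a * [:1, a:] = 1 - monom ((-a) ^ Suc r) (Suc r)" .
  show ?thesis unfolding trunc_mult_def e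
    by (rule poly_eqI) (auto simp: coeff_mod_monom coeff_monom)
qed

lemma lin_in_tu: assumes "1 \<le> r" shows "[:1, a:] \<in> carrier (trunc_units r)"
proof -
  have "degree [:1, a:] \<le> r" using assms degree_pCons_le[of 1 "[:a:]"] by simp
  then show ?thesis using ginv_mult[of r a] ginv_deg[of r a] unfolding tu_carrier
    by (auto simp: tm_comm)
qed

lemma ginv_in_tu: assumes "1 \<le> r" shows "ginv r a \<in> carrier (trunc_units r)"
proof -
  have "degree [:1, a:] \<le> r" using assms degree_pCons_le[of 1 "[:a:]"] by simp
  then show ?thesis using ginv_mult[of r a] ginv_deg[of r a] unfolding tu_carrier
    by blast
qed

lemma lin_inv: "1 \<le> r \<Longrightarrow> inv\<^bsub>trunc_units r\<^esub> [:1, a:] = ginv r a"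
proof -
  interpret comm_group "trunc_units r" by (rule tu_comm_group)
  assume "1 \<le> r"
  then show ?thesis using ginv_mult[of r a]
    by (intro inv_equality) (auto simp: lin_in_tu ginv_in_tu)
qed

definition wv :: "nat \<Rightarrow> 'a::field \<Rightarrow> nat \<Rightarrow> 'a" where
  "wv r a = (\<lambda>k. if k \<in> {1..r} then a ^ k else 0)"

lemma dl_lin: "1 \<le> r \<Longrightarrow> dl r [:1, a:] = wv r a"
proof (rule ext)
  fix k assume r: "1 \<le> r"
  show "dl r [:1, a:] k = wv r a k"
  proof (cases "k \<in> {1..r}")
    case True
    then obtain j where k: "k = Suc j" and j: "j < r" by (cases k) auto
    have "dl r [:1, a:] k = (-1)^j * (a * (-a)^j)"
      using True j by (simp add: dl_def lin_inv[OF r] k pderiv_pCons ginv_coeff)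
    also have "\<dots> = ((-1)^j * (-1)^j) * (a * a^j)" by (simp only: power_minus[of a j] mult_ac)
    also have "(-1::'a)^j * (-1)^j = ((-1) * (-1))^j" by (rule power_mult_distrib[symmetric])
    also have "\<dots> * (a * a^j) = a ^ k" by (simp add: k)
    finally show ?thesis using True by (simp add: wv_def)
  next
    case False
    then show ?thesis unfolding dl_def wv_def by auto
  qed
qed


section \<open>The prime subfield\<close>

lemma of_nat_mod_CHAR: "of_nat (n mod CHAR('a)) = (of_nat n :: 'a::semiring_1)"
proof -
  have "(of_nat n :: 'a) = of_nat (n mod CHAR('a) + CHAR('a) * (n div CHAR('a)))"
    by (simp only: mod_mult_div_eq)
  also have "\<dots> = of_nat (n mod CHAR('a))" by (simp only: of_nat_add of_nat_mult of_nat_CHAR) simp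
  finally show ?thesis by simp
qed

lemma range_of_nat_CHAR:
  assumes "CHAR('a::semiring_1) > 0"
  shows "range (of_nat :: nat \<Rightarrow> 'a) = of_nat ` {..<CHAR('a)}"
proof
  show "range (of_nat :: nat \<Rightarrow> 'a) \<subseteq> of_nat ` {..<CHAR('a)}"
  proof
    fix x :: 'a assume "x \<in> range of_nat"
    then obtain n where "x = of_nat n" by auto
    then have "x = of_nat (n mod CHAR('a))" by (simp add: of_nat_mod_CHAR)
    moreover have "n mod CHAR('a) < CHAR('a)" using assms by simp
    ultimately show "x \<in> of_nat ` {..<CHAR('a)}" by auto
  qed
qed auto

lemma card_range_of_nat_CHAR:
  assumes "CHAR('a::ring_1) > 0"
  shows "card (range (of_nat :: nat \<Rightarrow> 'a)) = CHAR('a)"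
proof -
  have "inj_on (of_nat :: nat \<Rightarrow> 'a) {..<CHAR('a)}"
  proof (rule inj_onI)
    fix x y assume x: "x \<in> {..<CHAR('a)}" and y: "y \<in> {..<CHAR('a)}" and e: "(of_nat x :: 'a) = of_nat y"
    show "x = y"
    proof (rule ccontr)
      assume "x \<noteq> y"
      then consider "x < y" | "y < x" by linarith
      then show False
      proof cases
        case 1
        then have "(of_nat (y - x) :: 'a) = 0" using e by (simp add: of_nat_diff)
        then have "CHAR('a) dvd (y - x)" by (simp add: of_nat_eq_0_iff_char_dvd)
        then show False using 1 y by (auto dest: dvd_imp_le)
      next
        case 2
        then have "(of_nat (x - y) :: 'a) = 0" using e by (simp add: of_nat_diff)
        then have "CHAR('a) dvd (x - y)" by (simp add: of_nat_eq_0_iff_char_dvd)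
        then show False using 2 x by (auto dest: dvd_imp_le)
      qed
    qed
  qed
  then show ?thesis using range_of_nat_CHAR[OF assms] by (simp add: card_image)
qed

lemma uminus_of_nat_range:
  assumes "CHAR('a::ring_1) > 0"
  shows "- (of_nat n :: 'a) \<in> range of_nat"
proof -
  have "(of_nat ((CHAR('a) - 1) * n) :: 'a) + of_nat n = of_nat (CHAR('a) * n)"
    using assms by (simp flip: of_nat_add add: algebra_simps)
  also have "\<dots> = 0" by simp
  finally have "of_nat ((CHAR('a) - 1) * n) = - (of_nat n :: 'a)" by (simp only: eq_neg_iff_add_eq_0)
  then show ?thesis by (metis rangeI)
qed

lemma CHAR_dvd_card_UNIV: "CHAR('a::{field,finite}) dvd card (UNIV :: 'a set)"
proof -
  have pos: "CHAR('a) > 0" by (simp add: finite_imp_CHAR_pos)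
  define G where "G = \<lparr>carrier = (UNIV :: 'a set), mult = (+), one = (0::'a)\<rparr>"
  have grp: "group G"
    by (rule groupI) (auto simp: G_def add_ac intro: exI[of _ "- x" for x])
  interpret group G by (rule grp)
  have invG: "inv\<^bsub>G\<^esub> x = - x" for x
    by (rule inv_equality) (auto simp: G_def)
  have sub: "subgroup (range of_nat) G"
  proof (rule subgroupI)
    show "range of_nat \<subseteq> carrier G" by (simp add: G_def)
  next
    show "range (of_nat :: nat \<Rightarrow> 'a) \<noteq> {}" by simp
  next
    fix a assume "a \<in> range (of_nat :: nat \<Rightarrow> 'a)"
    then show "inv\<^bsub>G\<^esub> a \<in> range of_nat" using uminus_of_nat_range[OF pos] by (auto simp: invG)
  next
    fix a b assume "a \<in> range (of_nat :: nat \<Rightarrow> 'a)" "b \<in> range (of_nat :: nat \<Rightarrow> 'a)"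
    then show "a \<otimes>\<^bsub>G\<^esub> b \<in> range of_nat" by (auto simp: G_def simp flip: of_nat_add)
  qed
  have "card (rcosets\<^bsub>G\<^esub> (range of_nat)) * card (range (of_nat :: nat \<Rightarrow> 'a)) = card (UNIV :: 'a set)"
    using lagrange_finite[OF _ sub] by (simp add: G_def Coset.order_def)
  then show ?thesis using card_range_of_nat_CHAR[OF pos] by (metis dvd_triv_right)
qed




lemma Fp_of_nat [simp]: "of_nat n \<in> prime_subfield"
  by (simp add: prime_subfield_def)

lemma Fp_0 [simp]: "(0::'a::field) \<in> prime_subfield"
  using Fp_of_nat[of 0, where 'a='a] by simp

lemma Fp_1 [simp]: "(1::'a::field) \<in> prime_subfield"
  using Fp_of_nat[of 1, where 'a='a] by simp

lemma Fp_add: "(x::'a::field) \<in> prime_subfield \<Longrightarrow> y \<in> prime_subfield \<Longrightarrow> x + y \<in> prime_subfield"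
proof -
  assume "x \<in> prime_subfield" "y \<in> prime_subfield"
  then obtain a b where "x = of_nat a" "y = of_nat b" by (auto simp: prime_subfield_def)
  then have "x + y = of_nat (a + b)" by simp
  then show ?thesis by (metis Fp_of_nat)
qed

lemma Fp_mult: "(x::'a::field) \<in> prime_subfield \<Longrightarrow> y \<in> prime_subfield \<Longrightarrow> x * y \<in> prime_subfield"
proof -
  assume "x \<in> prime_subfield" "y \<in> prime_subfield"
  then obtain a b where "x = of_nat a" "y = of_nat b" by (auto simp: prime_subfield_def)
  then have "x * y = of_nat (a * b)" by simp
  then show ?thesis by (metis Fp_of_nat)
qed

lemma Fp_sum: "(\<And>i. i \<in> A \<Longrightarrow> f i \<in> prime_subfield) \<Longrightarrow> sum f A \<in> prime_subfield"
  by (induction A rule: infinite_finite_induct) (auto intro: Fp_add)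

context
  assumes charp: "prime CHAR('a::field)"
begin

lemma CHAR_pos': "CHAR('a) > 0" using charp prime_gt_0_nat by blast

lemma Fp_uminus: "(x::'a) \<in> prime_subfield \<Longrightarrow> - x \<in> prime_subfield"
proof -
  assume "x \<in> prime_subfield"
  then obtain a where "x = of_nat a" by (auto simp: prime_subfield_def)
  then show ?thesis using uminus_of_nat_range[OF CHAR_pos', of a] by (simp add: prime_subfield_def)
qed

lemma Fp_diff: "(x::'a) \<in> prime_subfield \<Longrightarrow> y \<in> prime_subfield \<Longrightarrow> x - y \<in> prime_subfield"
proof -
  assume "x \<in> prime_subfield" "y \<in> prime_subfield"
  then have "x + - y \<in> prime_subfield" by (intro Fp_add Fp_uminus)
  then show ?thesis by (simp only: diff_conv_add_uminus)
qed

lemma Fp_inverse: 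
  assumes "(x::'a) \<in> prime_subfield" "x \<noteq> 0"
  shows "inverse x \<in> prime_subfield"
proof -
  obtain n where n: "x = of_nat n" using assms(1) by (auto simp: prime_subfield_def)
  have nd: "\<not> CHAR('a) dvd n" using assms(2) n by (simp add: of_nat_eq_0_iff_char_dvd)
  then have "n \<noteq> 0" by (metis dvd_0_right)
  have "coprime CHAR('a) n" using nd charp by (rule prime_imp_coprime[rotated])
  then have g: "gcd n CHAR('a) = 1" by (simp add: coprime_commute)
  obtain u v where uv: "n * u = CHAR('a) * v + gcd n CHAR('a)" using bezout_nat[OF \<open>n \<noteq> 0\<close>] by blast
  have "(of_nat (n * u) :: 'a) = of_nat (CHAR('a) * v + 1)" using uv g by simp
  also have "\<dots> = 1" by (simp only: of_nat_add of_nat_mult of_nat_CHAR) simp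
  finally have "x * of_nat u = 1" using n by (simp only: of_nat_mult)
  then have "inverse x = of_nat u" by (metis inverse_unique)
  then show ?thesis by simp
qed

lemma card_Fp: "card (prime_subfield :: 'a set) = CHAR('a)"
  unfolding prime_subfield_def using card_range_of_nat_CHAR[OF CHAR_pos'] .

lemma finite_Fp: "finite (prime_subfield :: 'a set)"
  using card_Fp CHAR_pos' card_ge_0_finite by metis

end

definition comb :: "('i \<Rightarrow> 'k \<Rightarrow> 'a::field) \<Rightarrow> ('i \<Rightarrow> 'a) \<Rightarrow> 'i set \<Rightarrow> 'k \<Rightarrow> 'a" where
  "comb w c J = (\<lambda>k. \<Sum>i\<in>J. c i * w i k)"

definition indepw :: "('i \<Rightarrow> 'k \<Rightarrow> 'a::field) \<Rightarrow> 'i set \<Rightarrow> bool" where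
  "indepw w J \<longleftrightarrow> (\<forall>c. (\<forall>i\<in>J. c i \<in> prime_subfield) \<and> comb w c J = 0 \<longrightarrow> (\<forall>i\<in>J. c i = 0))"

definition spanw :: "('i \<Rightarrow> 'k \<Rightarrow> 'a::field) \<Rightarrow> 'i set \<Rightarrow> ('k \<Rightarrow> 'a) set" where
  "spanw w J = {comb w c J | c. \<forall>i\<in>J. c i \<in> prime_subfield}"

lemma comb_cong: "(\<And>i. i \<in> J \<Longrightarrow> c i = d i) \<Longrightarrow> comb w c J = comb w d J"
  unfolding comb_def by (auto intro!: sum.cong)

lemma span_mono:
  assumes "finite I" "J \<subseteq> I"
  shows "spanw w J \<subseteq> spanw w I"
proof
  fix v assume "v \<in> spanw w J"
  then obtain c where c: "\<forall>i\<in>J. c i \<in> prime_subfield" and v: "v = comb w c J"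
    by (auto simp: spanw_def)
  define c' where "c' = (\<lambda>i. if i \<in> J then c i else 0)"
  have "comb w c' I = comb w c J"
  proof
    fix k
    have "comb w c' I k = (\<Sum>i\<in>I. if i \<in> J then c i * w i k else 0)"
      unfolding comb_def c'_def by (intro sum.cong) auto
    also have "\<dots> = (\<Sum>i\<in>I \<inter> J. c i * w i k)" using assms(1) by (rule sum.inter_restrict[symmetric])
    also have "I \<inter> J = J" using assms(2) by blast
    finally show "comb w c' I k = comb w c J k" by (simp add: comb_def)
  qed
  moreover have "\<forall>i\<in>I. c' i \<in> prime_subfield" using c by (auto simp: c'_def)
  ultimately have "\<exists>c''. v = comb w c'' I \<and> (\<forall>i\<in>I. c'' i \<in> prime_subfield)" using v by (intro exI[of _ c']) simp
  then show "v \<in> spanw w I" unfolding spanw_def by blast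
qed

context
  assumes charp: "prime CHAR('a::field)"
begin

lemma card_span_indep:
  fixes w :: "'i \<Rightarrow> 'k \<Rightarrow> 'a"
  assumes "finite J" "indepw w J"
  shows "card (spanw w J) = CHAR('a) ^ card J"
proof -
  have sp: "spanw w J = (\<lambda>c. comb w c J) ` (PiE J (\<lambda>_. prime_subfield))"
  proof
    show "spanw w J \<subseteq> (\<lambda>c. comb w c J) ` (PiE J (\<lambda>_. prime_subfield))"
    proof
      fix v assume "v \<in> spanw w J"
      then obtain c where c: "\<forall>i\<in>J. c i \<in> prime_subfield" and v: "v = comb w c J"
        by (auto simp: spanw_def)
      have "restrict c J \<in> PiE J (\<lambda>_. prime_subfield)" using c by auto
      moreover have "comb w (restrict c J) J = v" unfolding v by (rule comb_cong) simp
      ultimately show "v \<in> (\<lambda>c. comb w c J) ` (PiE J (\<lambda>_. prime_subfield))" by force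
    qed
  next
    show "(\<lambda>c. comb w c J) ` (PiE J (\<lambda>_. prime_subfield)) \<subseteq> spanw w J"
      by (auto simp: spanw_def PiE_def Pi_def)
  qed
  have inj: "inj_on (\<lambda>c. comb w c J) (PiE J (\<lambda>_. prime_subfield))"
  proof (rule inj_onI)
    fix c d assume c: "c \<in> PiE J (\<lambda>_. prime_subfield)" and d: "d \<in> PiE J (\<lambda>_. prime_subfield)"
      and e: "comb w c J = comb w d J"
    have "comb w (\<lambda>i. c i - d i) J = 0"
    proof
      fix k
      have "comb w (\<lambda>i. c i - d i) J k = comb w c J k - comb w d J k"
        unfolding comb_def by (simp add: left_diff_distrib sum_subtractf)
      then show "comb w (\<lambda>i. c i - d i) J k = 0 k" using e by simp
    qed
    moreover have "\<forall>i\<in>J. c i - d i \<in> prime_subfield"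
      using c d by (auto intro: Fp_diff[OF charp])
    ultimately have "\<forall>i\<in>J. c i - d i = 0"
      using assms(2)[unfolded indepw_def, rule_format, of "\<lambda>i. c i - d i"] by blast
    then show "c = d" using c d by (intro PiE_ext) auto
  qed
  have "card (spanw w J) = card (PiE J (\<lambda>_. prime_subfield :: 'a set))"
    using sp inj by (simp add: card_image)
  also have "\<dots> = CHAR('a) ^ card J"
    using assms(1) by (simp add: card_PiE card_Fp[OF charp])
  finally show ?thesis .
qed

lemma span_maximal:
  fixes w :: "'i \<Rightarrow> 'k \<Rightarrow> 'a"
  assumes I: "finite I" and JI: "J \<subseteq> I" and ind: "indepw w J"
    and max: "\<And>J'. J' \<subseteq> I \<Longrightarrow> indepw w J' \<Longrightarrow> card J' \<le> card J"
  shows "spanw w I \<subseteq> spanw w J"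
proof
  have finJ: "finite J" using I JI finite_subset by blast
  have rep: "\<exists>d. (\<forall>j\<in>J. d j \<in> prime_subfield) \<and> w i = comb w d J" if iI: "i \<in> I" for i
  proof (cases "i \<in> J")
    case True
    define d where "d = (\<lambda>j. if j = i then (1::'a) else 0)"
    have "w i = comb w d J"
    proof
      fix k
      have "comb w d J k = (\<Sum>j\<in>J. if j = i then w j k else 0)"
        unfolding comb_def d_def by (intro sum.cong) auto
      also have "\<dots> = w i k" using finJ True by (simp add: sum.delta')
      finally show "w i k = comb w d J k" by simp
    qed
    moreover have "\<forall>j\<in>J. d j \<in> prime_subfield" by (simp add: d_def)
    ultimately show ?thesis by blast
  next
    case False
    have "\<not> indepw w (insert i J)"
    proof
      assume "indepw w (insert i J)"
      then have "card (insert i J) \<le> card J" using max iI JI by blast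
      then show False using False finJ by simp
    qed
    then obtain c where c: "\<forall>j\<in>insert i J. c j \<in> prime_subfield"
      and c0: "comb w c (insert i J) = 0" and nz: "\<exists>j\<in>insert i J. c j \<noteq> 0"
      unfolding indepw_def by blast
    have ins: "comb w c (insert i J) k = c i * w i k + comb w c J k" for k
      unfolding comb_def by (rule sum.insert[OF finJ False])
    have ci: "c i \<noteq> 0"
    proof
      assume "c i = 0"
      have "comb w c J = 0"
      proof
        fix k
        have "comb w c (insert i J) k = 0" using c0 by simp
        then show "comb w c J k = 0 k" using ins[of k] \<open>c i = 0\<close> by simp
      qed
      moreover have "\<forall>j\<in>J. c j \<in> prime_subfield" using c by blast
      ultimately have "\<forall>j\<in>J. c j = 0" using ind[unfolded indepw_def, rule_format, of c] by blast
      then show False using nz \<open>c i = 0\<close> by auto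
    qed
    define d where "d = (\<lambda>j. - c j * inverse (c i))"
    have "w i = comb w d J"
    proof
      fix k
      have "comb w d J k = - inverse (c i) * comb w c J k"
        unfolding comb_def d_def by (simp add: sum_distrib_left mult_ac)
      also have "comb w c J k = - (c i * w i k)"
      proof -
        have "c i * w i k + comb w c J k = 0" using ins[of k] fun_cong[OF c0, of k] by simp
        then show ?thesis by (metis add.commute eq_neg_iff_add_eq_0)
      qed
      also have "- inverse (c i) * - (c i * w i k) = w i k" using ci by simp
      finally show "w i k = comb w d J k" by simp
    qed
    moreover have "\<forall>j\<in>J. d j \<in> prime_subfield"
    proof
      fix j assume "j \<in> J"
      then have "c j \<in> prime_subfield" using c by blast
      moreover have "c i \<in> prime_subfield" using c by blast
      ultimately show "d j \<in> prime_subfield" unfolding d_def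
        by (intro Fp_mult Fp_uminus[OF charp] Fp_inverse[OF charp] ci)
    qed
    ultimately show ?thesis by blast
  qed
  then obtain D where D: "\<And>i. i \<in> I \<Longrightarrow> (\<forall>j\<in>J. D i j \<in> prime_subfield) \<and> w i = comb w (D i) J"
    by metis
  fix v assume "v \<in> spanw w I"
  then obtain c where c: "\<forall>i\<in>I. c i \<in> prime_subfield" and v: "v = comb w c I"
    by (auto simp: spanw_def)
  define e where "e = (\<lambda>j. \<Sum>i\<in>I. c i * D i j)"
  have "comb w e J = comb w c I"
  proof
    fix k
    have "comb w e J k = (\<Sum>j\<in>J. \<Sum>i\<in>I. c i * D i j * w j k)"
      unfolding comb_def e_def by (simp add: sum_distrib_right)
    also have "\<dots> = (\<Sum>i\<in>I. \<Sum>j\<in>J. c i * D i j * w j k)"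
      by (rule sum.swap)
    also have "\<dots> = (\<Sum>i\<in>I. c i * (\<Sum>j\<in>J. D i j * w j k))"
      by (simp add: sum_distrib_left mult.assoc)
    also have "\<dots> = (\<Sum>i\<in>I. c i * w i k)"
    proof (rule sum.cong)
      fix i assume "i \<in> I"
      then have "w i = comb w (D i) J" using D by blast
      then have "w i k = comb w (D i) J k" by simp
      then show "c i * (\<Sum>j\<in>J. D i j * w j k) = c i * w i k" by (simp add: comb_def)
    qed simp
    finally show "comb w e J k = comb w c I k" by (simp add: comb_def)
  qed
  moreover have "\<forall>j\<in>J. e j \<in> prime_subfield"
    using c D by (auto simp: e_def intro!: Fp_sum Fp_mult)
  ultimately have "\<exists>c''. v = comb w c'' J \<and> (\<forall>i\<in>J. c'' i \<in> prime_subfield)" using v by (intro exI[of _ e]) simp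
  then show "v \<in> spanw w J" unfolding spanw_def by blast
qed

lemma card_span_rank:
  fixes w :: "'i \<Rightarrow> 'k \<Rightarrow> 'a"
  assumes I: "finite I"
  shows "card (spanw w I) = CHAR('a) ^ Max {card J | J. J \<subseteq> I \<and> indepw w J}"
proof -
  let ?S = "{card J | J. J \<subseteq> I \<and> indepw w J}"
  have finS: "finite ?S"
  proof -
    have "?S \<subseteq> card ` Pow I" by auto
    then show ?thesis using I by (meson finite_Pow_iff finite_imageI finite_subset)
  qed
  have "indepw w {}" by (simp add: indepw_def)
  then have "card {} \<in> ?S" by (intro CollectI exI[of _ "{}"]) simp
  then have neS: "?S \<noteq> {}" by (metis empty_iff)
  have "Max ?S \<in> ?S" by (rule Max_in[OF finS neS])
  then obtain J where J0: "Max ?S = card J" "J \<subseteq> I" "indepw w J"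
    unfolding mem_Collect_eq by (elim exE conjE) 
  then have J: "J \<subseteq> I" "indepw w J" "card J = Max ?S" by simp_all
  have max: "card J' \<le> card J" if "J' \<subseteq> I" "indepw w J'" for J'
  proof -
    have "card J' \<in> ?S" using that by (intro CollectI exI[of _ J']) simp
    then show ?thesis using Max_ge[OF finS] J(3) by simp
  qed
  have "spanw w I = spanw w J"
    using span_maximal[OF I J(1,2) max] span_mono[OF I J(1)] by blast
  then show ?thesis using card_span_indep[of J w] J I finite_subset by metis
qed

end



lemma CHAR_eq_p:
  assumes "prime p" "card (UNIV :: 'a::{field,finite} set) = p ^ m"
  shows "CHAR('a) = p"
proof -
  have pos: "CHAR('a) > 0" by (simp add: finite_imp_CHAR_pos)
  then have pr: "prime CHAR('a)" by (rule prime_CHAR_semidom)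
  have "CHAR('a) dvd p ^ m" using CHAR_dvd_card_UNIV[where 'a='a] assms(2) by simp
  then have "CHAR('a) dvd p" using pr prime_dvd_power by blast
  then show ?thesis using pr assms(1) primes_dvd_imp_eq by blast
qed

lemma Fp_coord_prop:
  assumes "is_Fp_basis m b"
  shows "(\<forall>j<m. Fp_coord m b x j \<in> prime_subfield) \<and> (\<forall>j\<ge>m. Fp_coord m b x j = 0)
       \<and> x = (\<Sum>j<m. Fp_coord m b x j * b j)"
proof -
  have "\<exists>!c. (\<forall>j<m. c j \<in> prime_subfield) \<and> (\<forall>j\<ge>m. c j = 0) \<and> x = (\<Sum>j<m. c j * b j)"
    using assms unfolding is_Fp_basis_def by blast
  then show ?thesis unfolding Fp_coord_def by (rule theI')
qed

lemma coord_lin: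
  assumes B: "is_Fp_basis m (b :: nat \<Rightarrow> 'a::field)" and J: "finite J"
    and c: "\<forall>i\<in>J. c i \<in> prime_subfield"
  shows "(\<forall>j<m. (\<Sum>i\<in>J. c i * Fp_coord m b (x i) j) = 0) \<longleftrightarrow> (\<Sum>i\<in>J. c i * x i) = 0"
proof -
  have rep: "(\<Sum>i\<in>J. c i * x i) = (\<Sum>j<m. (\<Sum>i\<in>J. c i * Fp_coord m b (x i) j) * b j)"
  proof -
    have "(\<Sum>i\<in>J. c i * x i) = (\<Sum>i\<in>J. c i * (\<Sum>j<m. Fp_coord m b (x i) j * b j))"
    proof (rule sum.cong)
      fix i assume "i \<in> J"
      have "x i = (\<Sum>j<m. Fp_coord m b (x i) j * b j)" using Fp_coord_prop[OF B, of "x i"] by blast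
      then show "c i * x i = c i * (\<Sum>j<m. Fp_coord m b (x i) j * b j)" by simp
    qed simp
    also have "\<dots> = (\<Sum>i\<in>J. \<Sum>j<m. c i * Fp_coord m b (x i) j * b j)"
      by (simp add: sum_distrib_left mult.assoc)
    also have "\<dots> = (\<Sum>j<m. \<Sum>i\<in>J. c i * Fp_coord m b (x i) j * b j)"
      by (rule sum.swap)
    also have "\<dots> = (\<Sum>j<m. (\<Sum>i\<in>J. c i * Fp_coord m b (x i) j) * b j)"
      by (simp add: sum_distrib_right)
    finally show ?thesis .
  qed
  show ?thesis
  proof
    assume "\<forall>j<m. (\<Sum>i\<in>J. c i * Fp_coord m b (x i) j) = 0"
    then show "(\<Sum>i\<in>J. c i * x i) = 0" unfolding rep by simp
  next
    assume z: "(\<Sum>i\<in>J. c i * x i) = 0"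
    define d where "d = (\<lambda>j. if j < m then (\<Sum>i\<in>J. c i * Fp_coord m b (x i) j) else 0)"
    have u: "\<exists>!e. (\<forall>j<m. e j \<in> prime_subfield) \<and> (\<forall>j\<ge>m. e j = 0) \<and> (0::'a) = (\<Sum>j<m. e j * b j)"
      using B unfolding is_Fp_basis_def by blast
    have Pd: "(\<forall>j<m. d j \<in> prime_subfield) \<and> (\<forall>j\<ge>m. d j = 0) \<and> (0::'a) = (\<Sum>j<m. d j * b j)"
    proof (intro conjI allI impI)
      fix j assume "j < m"
      have "(\<Sum>i\<in>J. c i * Fp_coord m b (x i) j) \<in> prime_subfield"
      proof (rule Fp_sum)
        fix i assume "i \<in> J"
        then have "c i \<in> prime_subfield" using c by blast
        moreover have "Fp_coord m b (x i) j \<in> prime_subfield"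
          using Fp_coord_prop[OF B, of "x i"] \<open>j < m\<close> by blast
        ultimately show "c i * Fp_coord m b (x i) j \<in> prime_subfield" by (rule Fp_mult)
      qed
      then show "d j \<in> prime_subfield" unfolding d_def using \<open>j < m\<close> by simp
    next
      fix j assume "m \<le> j" then show "d j = 0" by (simp add: d_def)
    next
      show "(0::'a) = (\<Sum>j<m. d j * b j)" using z rep by (simp add: d_def)
    qed
    have P0: "(\<forall>j<m. (\<lambda>_. 0::'a) j \<in> prime_subfield) \<and> (\<forall>j\<ge>m. (\<lambda>_. 0::'a) j = 0) \<and> (0::'a) = (\<Sum>j<m. (\<lambda>_. 0) j * b j)"
      by simp
    define P where "P = (\<lambda>e. (\<forall>j<m. e j \<in> prime_subfield) \<and> (\<forall>j\<ge>m. e j = 0) \<and> (0::'a) = (\<Sum>j<m. e j * b j))"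
    have u': "\<exists>!e. P e" using u unfolding P_def .
    have "P d" using Pd unfolding P_def .
    moreover have "P (\<lambda>_. 0)" using P0 unfolding P_def .
    ultimately have "d = (\<lambda>_. 0)" using u' by blast
    then show "\<forall>j<m. (\<Sum>i\<in>J. c i * Fp_coord m b (x i) j) = 0"
    proof (intro allI impI)
      fix j assume "d = (\<lambda>_. 0)" "j < m"
      then have "d j = 0" by simp
      then show "(\<Sum>i\<in>J. c i * Fp_coord m b (x i) j) = 0" using \<open>j < m\<close>
        by (simp add: d_def)
    qed
  qed
qed


lemma comb_single:
  assumes "finite I" "i0 \<in> I"
  shows "comb w (\<lambda>i. if i = i0 then a else 0) I = (\<lambda>k. a * w i0 k)"
proof
  fix k
  have "comb w (\<lambda>i. if i = i0 then a else 0) I k = (\<Sum>i\<in>I. if i = i0 then a * w i k else 0)"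
    unfolding comb_def by (intro sum.cong) auto
  also have "\<dots> = a * w i0 k" using assms by (simp add: sum.delta')
  finally show "comb w (\<lambda>i. if i = i0 then a else 0) I k = a * w i0 k" .
qed

lemma Vg_inv: "inv\<^bsub>(Vg :: (nat \<Rightarrow> 'a::field) monoid)\<^esub> h = - h"
proof -
  interpret comm_group "Vg :: (nat \<Rightarrow> 'a) monoid" by (rule Vg_group)
  show ?thesis by (rule inv_equality) auto
qed

lemma gen_span:
  fixes w :: "'i \<Rightarrow> nat \<Rightarrow> 'a::field"
  assumes charp: "prime CHAR('a)" and I: "finite I"
  shows "generate (Vg :: (nat \<Rightarrow> 'a) monoid) (w ` I) = spanw w I"
proof
  show "generate Vg (w ` I) \<subseteq> spanw w I"
  proof
    fix v assume "v \<in> generate Vg (w ` I)"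
    then show "v \<in> spanw w I"
    proof (induction rule: generate.induct)
      case one
      have "comb w (\<lambda>_. 0) I = 0" by (simp add: comb_def zero_fun_def)
      then show ?case unfolding spanw_def by (auto intro!: exI[of _ "\<lambda>_. 0"])
    next
      case (incl h)
      then obtain i0 where i0: "i0 \<in> I" "h = w i0" by blast
      have "comb w (\<lambda>i. if i = i0 then 1 else 0) I = h" using comb_single[OF I i0(1), of w 1] i0(2) by simp
      moreover have "\<forall>i\<in>I. (if i = i0 then 1 else 0) \<in> (prime_subfield :: 'a set)" by simp
      ultimately show ?case unfolding spanw_def by blast
    next
      case (inv h)
      then obtain i0 where i0: "i0 \<in> I" "h = w i0" by blast
      have "comb w (\<lambda>i. if i = i0 then -1 else 0) I = - h"
        using comb_single[OF I i0(1), of w "-1"] i0(2) by (simp add: fun_eq_iff)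
      moreover have "\<forall>i\<in>I. (if i = i0 then -1 else 0) \<in> (prime_subfield :: 'a set)"
        using Fp_uminus[OF charp Fp_1] by simp
      ultimately show ?case unfolding spanw_def Vg_inv
        by (intro CollectI exI[of _ "\<lambda>i. if i = i0 then -1 else 0"]) auto
    next
      case (eng h1 h2)
      then obtain c d where c: "\<forall>i\<in>I. c i \<in> prime_subfield" "h1 = comb w c I"
        and d: "\<forall>i\<in>I. d i \<in> prime_subfield" "h2 = comb w d I"
        unfolding spanw_def by blast
      have "comb w (\<lambda>i. c i + d i) I = h1 \<otimes>\<^bsub>Vg\<^esub> h2"
        using c(2) d(2) by (simp add: comb_def fun_eq_iff distrib_right sum.distrib)
      moreover have "\<forall>i\<in>I. c i + d i \<in> prime_subfield" using c(1) d(1) by (simp add: Fp_add)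
      ultimately show ?case unfolding spanw_def
        by (intro CollectI exI[of _ "\<lambda>i. c i + d i"]) auto
    qed
  qed
next
  have multiple: "(\<lambda>k. of_nat n * w i k) \<in> generate Vg (w ` I)" if "i \<in> I" for i n
  proof (induction n)
    case 0
    have "(\<lambda>k. of_nat 0 * w i k) = one Vg" by (simp add: zero_fun_def)
    then show ?case by (metis generate.one)
  next
    case (Suc n)
    have "(\<lambda>k. of_nat (Suc n) * w i k) = (\<lambda>k. of_nat n * w i k) \<otimes>\<^bsub>Vg\<^esub> w i"
      by (simp add: fun_eq_iff distrib_right)
    moreover have "w i \<in> generate Vg (w ` I)" using that by (intro generate.incl) blast
    ultimately show ?case using Suc generate.eng by metis
  qed
  have "\<forall>c. (\<forall>i\<in>J. c i \<in> prime_subfield) \<longrightarrow> comb w c J \<in> generate Vg (w ` I)" if "J \<subseteq> I" for J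
  proof -
    have "finite J" using I that finite_subset by blast
    then show ?thesis using that
    proof (induction J rule: finite_induct)
      case empty
      have "comb w c {} = one Vg" for c :: "'i \<Rightarrow> 'a" by (simp add: comb_def zero_fun_def)
      then show ?case by (metis generate.one)
    next
      case (insert i J)
      show ?case
      proof (intro allI impI)
        fix c :: "'i \<Rightarrow> 'a" assume c: "\<forall>j\<in>insert i J. c j \<in> prime_subfield"
        then obtain n where n: "c i = of_nat n" by (auto simp: prime_subfield_def)
        have "comb w c (insert i J) = (\<lambda>k. of_nat n * w i k) \<otimes>\<^bsub>Vg\<^esub> comb w c J"
          using insert(1,2) n by (simp add: comb_def fun_eq_iff)
        moreover have "(\<lambda>k. of_nat n * w i k) \<in> generate Vg (w ` I)"
          using multiple insert(4) by blast
        moreover have "comb w c J \<in> generate Vg (w ` I)" using insert c by blast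
        ultimately show "comb w c (insert i J) \<in> generate Vg (w ` I)" by (metis generate.eng)
      qed
    qed
  qed
  then show "spanw w I \<subseteq> generate Vg (w ` I)" unfolding spanw_def by blast
qed


lemma indep_equiv:
  assumes B: "is_Fp_basis m (b :: nat \<Rightarrow> 'a::field)" and J: "finite J"
  shows "Fp_indep_cols ({1..r} \<times> {..<m}) J (G_mat m r b \<alpha>) \<longleftrightarrow> indepw (\<lambda>i. wv r (\<alpha> i)) J"
proof -
  have key: "(\<forall>x\<in>{1..r} \<times> {..<m}. (\<Sum>i\<in>J. c i * G_mat m r b \<alpha> x i) = 0)
        \<longleftrightarrow> comb (\<lambda>i. wv r (\<alpha> i)) c J = 0"
    if c: "\<forall>i\<in>J. c i \<in> prime_subfield" for c
  proof -
    have "(\<forall>x\<in>{1..r} \<times> {..<m}. (\<Sum>i\<in>J. c i * G_mat m r b \<alpha> x i) = 0)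
        \<longleftrightarrow> (\<forall>k\<in>{1..r}. \<forall>j<m. (\<Sum>i\<in>J. c i * Fp_coord m b (\<alpha> i ^ k) j) = 0)"
      by (auto simp: G_mat_def)
    also have "\<dots> \<longleftrightarrow> (\<forall>k\<in>{1..r}. (\<Sum>i\<in>J. c i * \<alpha> i ^ k) = 0)"
      using coord_lin[OF B J c, of "\<lambda>i. \<alpha> i ^ k" for k] by simp
    also have "\<dots> \<longleftrightarrow> comb (\<lambda>i. wv r (\<alpha> i)) c J = 0"
    proof
      assume h: "\<forall>k\<in>{1..r}. (\<Sum>i\<in>J. c i * \<alpha> i ^ k) = 0"
      show "comb (\<lambda>i. wv r (\<alpha> i)) c J = 0"
      proof
        fix k show "comb (\<lambda>i. wv r (\<alpha> i)) c J k = 0 k"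
          using h by (cases "k \<in> {1..r}") (auto simp: comb_def wv_def)
      qed
    next
      assume h: "comb (\<lambda>i. wv r (\<alpha> i)) c J = 0"
      show "\<forall>k\<in>{1..r}. (\<Sum>i\<in>J. c i * \<alpha> i ^ k) = 0"
      proof
        fix k assume k: "k \<in> {1..r}"
        have "comb (\<lambda>i. wv r (\<alpha> i)) c J k = 0" using h by simp
        then show "(\<Sum>i\<in>J. c i * \<alpha> i ^ k) = 0" using k by (simp add: comb_def wv_def)
      qed
    qed
    finally show ?thesis .
  qed
  show ?thesis
    unfolding Fp_indep_cols_def indepw_def
  proof (intro iffI allI impI)
    fix c assume A: "\<forall>c. (\<forall>i\<in>J. c i \<in> prime_subfield) \<and>
             (\<forall>x\<in>{1..r} \<times> {..<m}. (\<Sum>i\<in>J. c i * G_mat m r b \<alpha> x i) = 0) \<longrightarrow>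
             (\<forall>i\<in>J. c i = 0)"
      and c: "(\<forall>i\<in>J. c i \<in> prime_subfield) \<and> comb (\<lambda>i. wv r (\<alpha> i)) c J = 0"
    then show "\<forall>i\<in>J. c i = 0" using key[of c] by blast
  next
    fix c assume A: "\<forall>c. (\<forall>i\<in>J. c i \<in> prime_subfield) \<and> comb (\<lambda>i. wv r (\<alpha> i)) c J = 0 \<longrightarrow>
             (\<forall>i\<in>J. c i = 0)"
      and c: "(\<forall>i\<in>J. c i \<in> prime_subfield) \<and>
             (\<forall>x\<in>{1..r} \<times> {..<m}. (\<Sum>i\<in>J. c i * G_mat m r b \<alpha> x i) = 0)"
    then show "\<forall>i\<in>J. c i = 0" using key[of c] by blast
  qed
qed

theorem lemma4p1:
  fixes p m r :: nat and \<alpha> :: "nat \<Rightarrow> 'a::{field,finite}" and b :: "nat \<Rightarrow> 'a"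
    and I :: "nat set"
  assumes "prime p"
    and "card (UNIV :: 'a set) = p ^ m"
    and "1 \<le> r" and "r < p"
    and "bij_betw \<alpha> {1..card (UNIV :: 'a set) - 1} (UNIV - {0})"
    and "is_Fp_basis m b"
    and "I \<subseteq> {1..card (UNIV :: 'a set) - 1}"
  shows "card (generate (calG r) (calG_class r ` \<alpha> ` I)) = p ^ (r * m)
     \<longleftrightarrow> Fp_rank ({1..r} \<times> {..<m}) I (G_mat m r b \<alpha>) = r * m"
proof -
  have CH: "CHAR('a) = p" by (rule CHAR_eq_p[OF assms(1,2)])
  have charp: "prime CHAR('a)" using CH assms(1) by simp
  have charr: "of_nat n \<noteq> (0::'a)" if "0 < n" "n \<le> r" for n
  proof
    assume "of_nat n = (0::'a)"
    then have "p dvd n" using CH by (simp add: of_nat_eq_0_iff_char_dvd)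
    then show False using that assms(4) by (auto dest: dvd_imp_le)
  qed
  have finI: "finite I" using assms(7) finite_subset by blast
  define W where "W = (\<lambda>i. wv r (\<alpha> i))"
  interpret G: comm_group "trunc_units r :: 'a poly monoid" by (rule tu_comm_group)
  interpret V: comm_group "Vg :: (nat \<Rightarrow> 'a) monoid" by (rule Vg_group)
  interpret h: group_hom "trunc_units r :: 'a poly monoid" "Vg :: (nat \<Rightarrow> 'a) monoid" "dl r"
    by (intro group_hom.intro group_hom_axioms.intro G.group_axioms V.group_axioms dl_hom)
  have ker: "kernel (trunc_units r) Vg (dl r) = (const_units :: 'a poly set)"
    by (rule dl_kernel[OF charr])
  define \<Phi> :: "'a poly set \<Rightarrow> nat \<Rightarrow> 'a" where "\<Phi> = (\<lambda>X. the_elem (dl r ` X))"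
  have calG: "calG r = (trunc_units r :: 'a poly monoid) Mod kernel (trunc_units r) Vg (dl r)"
    unfolding calG_def ker ..
  have Qgrp: "group (calG r :: 'a poly set monoid)"
    unfolding calG by (rule normal.factorgroup_is_group[OF h.normal_kernel])
  interpret Q: group "calG r :: 'a poly set monoid" by (rule Qgrp)
  have homQ: "group_hom (calG r :: 'a poly set monoid) Vg \<Phi>"
    by (intro group_hom.intro group_hom_axioms.intro Qgrp V.group_axioms)
      (unfold calG \<Phi>_def, rule h.FactGroup_hom)
  have injQ: "inj_on \<Phi> (carrier (calG r :: 'a poly set monoid))"
    unfolding calG \<Phi>_def by (rule h.FactGroup_inj_on)
  have cls: "calG_class r a \<in> carrier (calG r) \<and> \<Phi> (calG_class r a) = wv r a" for a :: 'a
  proof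
    have x: "[:1, a:] \<in> carrier (trunc_units r)" by (rule lin_in_tu[OF assms(3)])
    have K: "kernel (trunc_units r) Vg (dl r) \<subseteq> carrier (trunc_units r)"
      by (auto simp: kernel_def)
    have e: "calG_class r a = kernel (trunc_units r) Vg (dl r) #>\<^bsub>trunc_units r\<^esub> [:1, a:]"
      unfolding calG_class_def ker ..
    show "calG_class r a \<in> carrier (calG r)"
      unfolding e calG by (simp add: FactGroup_def G.rcosetsI[OF K x])
    have "dl r ` (kernel (trunc_units r) Vg (dl r) #>\<^bsub>trunc_units r\<^esub> [:1, a:]) = {dl r [:1, a:]}"
    proof
      show "dl r ` (kernel (trunc_units r) Vg (dl r) #>\<^bsub>trunc_units r\<^esub> [:1, a:]) \<subseteq> {dl r [:1, a:]}"
      proof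
        fix y assume "y \<in> dl r ` (kernel (trunc_units r) Vg (dl r) #>\<^bsub>trunc_units r\<^esub> [:1, a:])"
        then obtain k where k: "k \<in> kernel (trunc_units r) Vg (dl r)"
          and y: "y = dl r (k \<otimes>\<^bsub>trunc_units r\<^esub> [:1, a:])"
          unfolding r_coset_def by blast
        have "k \<in> carrier (trunc_units r)" "dl r k = 0" using k by (auto simp: kernel_def)
        then have "y = dl r k + dl r [:1, a:]" using y x h.hom_mult by fastforce
        then show "y \<in> {dl r [:1, a:]}" using \<open>dl r k = 0\<close> by simp
      qed
    next
      have "\<one>\<^bsub>trunc_units r\<^esub> \<in> kernel (trunc_units r :: 'a poly monoid) Vg (dl r)"
        using G.one_closed h.hom_one by (simp add: kernel_def)
      then have "\<one>\<^bsub>trunc_units r\<^esub> \<otimes>\<^bsub>trunc_units r\<^esub> [:1, a:] \<in> kernel (trunc_units r) Vg (dl r) #>\<^bsub>trunc_units r\<^esub> [:1, a:]"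
        unfolding r_coset_def by blast
      moreover have l1: "\<one>\<^bsub>trunc_units r\<^esub> \<otimes>\<^bsub>trunc_units r\<^esub> [:1, a:] = [:1, a:]"
        by (rule G.l_one[OF x])
      ultimately have "[:1, a:] \<in> kernel (trunc_units r) Vg (dl r) #>\<^bsub>trunc_units r\<^esub> [:1, a:]"
        by (simp only:)
      then show "{dl r [:1, a:]} \<subseteq> dl r ` (kernel (trunc_units r) Vg (dl r) #>\<^bsub>trunc_units r\<^esub> [:1, a:])"
        by blast
    qed
    then show "\<Phi> (calG_class r a) = wv r a" unfolding \<Phi>_def e using dl_lin[OF assms(3)] by simp
  qed
  define S where "S = calG_class r ` \<alpha> ` I"
  have Ssub: "S \<subseteq> carrier (calG r)" using cls unfolding S_def by blast
  have PhiS: "\<Phi> ` S = W ` I" using cls unfolding S_def W_def image_image by simp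
  have "card (generate (calG r) S) = card (\<Phi> ` generate (calG r) S)"
    using card_image[OF inj_on_subset[OF injQ Q.generate_incl[OF Ssub]]] by simp
  also have "\<Phi> ` generate (calG r) S = generate Vg (\<Phi> ` S)"
    using group_hom.generate_img[OF homQ Ssub] by simp
  also have "\<dots> = spanw W I" unfolding PhiS by (rule gen_span[OF charp finI])
  finally have c1: "card (generate (calG r) S) = p ^ Max {card J | J. J \<subseteq> I \<and> indepw W J}"
    using card_span_rank[OF charp finI, of W] CH by simp
  have "{card J | J. J \<subseteq> I \<and> Fp_indep_cols ({1..r} \<times> {..<m}) J (G_mat m r b \<alpha>)}
      = {card J | J. J \<subseteq> I \<and> indepw W J}"
    using indep_equiv[OF assms(6)] finI finite_subset unfolding W_def by metis
  then have c2: "Fp_rank ({1..r} \<times> {..<m}) I (G_mat m r b \<alpha>) = Max {card J | J. J \<subseteq> I \<and> indepw W J}"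
    unfolding Fp_rank_def by simp
  have p1: "1 < p" using assms(1) prime_gt_1_nat by blast
  show ?thesis unfolding S_def[symmetric] c1 c2 using power_inject_exp[OF p1] by blast
qed


end
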